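(* Let $p$ be a prime, let $e\geq2$ and $d\geq2$ be integers, let $\lambda\in\{1,\dots,\min(e,d-1)\}$, and let $\alpha=(\alpha_1,\dots,\alpha_d)\in\mathcal R_\lambda(d,e)$ with $\mu=\mu(\alpha)$. Let $\mathcal P(p^e,d)\subset\mathbb R^d$ be the convex hull of all $d$-dimensional vector-factorisations of $p^e$. Then the inequality $$\sum_{i=1}^dp^{\alpha_i} x_i\geq\lambda p^{\mu+1}+(d-\lambda)p^\mu$$ holds with equality on every element of the set $$S_\alpha=\Big\{(p^{\mu-\alpha_1+\epsilon_1},\dots,p^{\mu-\alpha_d+\epsilon_d})\ :\ (\epsilon_1,\dots,\epsilon_d)\in\{0,1\}^d,\ \textstyle\sum_i\epsilon_i=\lambda\Big\},$$ which is a set of vertices of $\mathcal P(p^e,d)$. The convex hull of $S_\alpha$ is a facet of $\mathcal P(p^e,d)$ which is affinely equivalent to the $(d-1)$-dimensional hypersimplex $\Delta(\lambda)$.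
   Context: $\mathbb N=\{0,1,2,\dots\}$. A $d$-dimensional vector-factorisation of $N\geq1$ is a vector $(v_1,\dots,v_d)\in\mathbb N^d$ with $v_1\cdots v_d=N$. $\mathcal R_\lambda(d,e)$ is the set of all $\alpha\in\mathbb N^d$ with $\min(\alpha_1,\dots,\alpha_d)=0$, $\max(\alpha_1,\dots,\alpha_d)\,d<e+\sum_i\alpha_i$ and $e+\sum_i\alpha_i\equiv\lambda\pmod d$; for such $\alpha$, $\mu(\alpha)$ is the integer with $\mu(\alpha)d+\lambda=e+\sum_i\alpha_i$. $\Delta(\lambda)=\mathrm{Conv}\{\epsilon\in\{0,1\}^d:\sum_i\epsilon_i=\lambda\}$ is the hypersimplex of parameter $\lambda$. *)

theory Defs
  imports "HOL-Analysis.Analysis" "HOL-Number_Theory.Cong"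
begin

text \<open>Dimension d is CARD('n); vectors in R^d are real^'n, vectors in N^d are nat^'n.\<close>

definition vec_factorisations :: "nat \<Rightarrow> (real^'n) set" where
  "vec_factorisations N =
     {x. \<exists>v::nat^'n. (\<Prod>i\<in>UNIV. v$i) = N \<and> x = (\<chi> i. real (v$i))}"

definition factorisation_polytope :: "nat \<Rightarrow> (real^'n) set" where
  "factorisation_polytope N = convex hull (vec_factorisations N)"

definition R_set :: "nat \<Rightarrow> nat \<Rightarrow> (nat^'n) set" where
  "R_set lam e = {\<alpha>. Min (range (\<lambda>i. \<alpha>$i)) = 0
      \<and> Max (range (\<lambda>i. \<alpha>$i)) * CARD('n) < e + (\<Sum>i\<in>UNIV. \<alpha>$i)
      \<and> [e + (\<Sum>i\<in>UNIV. \<alpha>$i) = lam] (mod CARD('n))}"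

definition mu_of :: "nat \<Rightarrow> nat \<Rightarrow> nat^'n \<Rightarrow> int" where
  "mu_of lam e \<alpha> = (int e + (\<Sum>i\<in>UNIV. int (\<alpha>$i)) - int lam) div int CARD('n)"

definition hypersimplex :: "nat \<Rightarrow> (real^'n) set" where
  "hypersimplex lam = convex hull
     {x. (\<forall>i. x$i \<in> {0,1}) \<and> (\<Sum>i\<in>UNIV. x$i) = real lam}"

definition S_alpha :: "nat \<Rightarrow> nat \<Rightarrow> nat \<Rightarrow> nat^'n \<Rightarrow> (real^'n) set" where
  "S_alpha p lam e \<alpha> =
     {x. \<exists>\<epsilon>::nat^'n. (\<forall>i. \<epsilon>$i \<in> {0,1}) \<and> (\<Sum>i\<in>UNIV. \<epsilon>$i) = lam \<and>
         x = (\<chi> i. real p powi (mu_of lam e \<alpha> - int (\<alpha>$i) + int (\<epsilon>$i)))}"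

definition affinely_equivalent :: "(real^'n) set \<Rightarrow> (real^'n) set \<Rightarrow> bool" where
  "affinely_equivalent A B \<longleftrightarrow>
     (\<exists>L c. linear L \<and> bij L \<and> (\<lambda>x. L x + c) ` A = B)"

end

theory Submission
  imports Defs "HOL-Computational_Algebra.Primes"
begin


lemma pow_up:
  fixes q :: real assumes q: "q \<ge> 2"
  shows "q^(m+j) \<ge> q^m + real j * (q^(m+1) - q^m) \<and> (j \<ge> 2 \<longrightarrow> q^(m+j) > q^m + real j * (q^(m+1) - q^m))"
proof (induction j)
  case 0 then show ?case by simp
next
  case (Suc j)
  have pm: "q^m > 0" using q by simp
  have D: "q^(m+1) - q^m = q^m*(q-1)" by (simp add: algebra_simps)
  have e: "q^(m+Suc j) - q^(m+j) = q^(m+j)*(q-1)" by (simp add: algebra_simps)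
  have "q^(m+j) \<ge> q^m" using q by (simp add: power_increasing)
  hence s1: "q^(m+Suc j) - q^(m+j) \<ge> q^(m+1) - q^m" using q e D
    by (simp add: mult_right_mono)
  have s2: "j \<ge> 1 \<Longrightarrow> q^(m+Suc j) - q^(m+j) > q^(m+1) - q^m"
  proof -
    assume "j \<ge> 1"
    hence "q^(m+j) > q^m" using q by (simp add: power_strict_increasing)
    thus ?thesis using q e D by (simp add: mult_strict_right_mono)
  qed
  show ?case using Suc s1 s2 by (auto simp: algebra_simps)
qed

lemma pow_down:
  fixes q :: real assumes q: "q \<ge> 2"
  shows "j \<ge> 1 \<Longrightarrow> q^k > q^(k+j) - real j * (q^(k+j+1) - q^(k+j))"
proof (induction j rule: nat_induct_at_least)
  case base
  have "q^(k+1+1) - q^(k+1) = q^k * (q*q - q)" by (simp add: algebra_simps)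
  moreover have "(q-1)*(q-1) > 0" using q by simp
  hence "q*q - 2*q + 1 > 0" by (simp add: algebra_simps)
  hence "q*q-q > q - 1" by simp
  moreover have "q^k * (q*q-q) > q^k*(q - 1)" using q \<open>q*q-q > q - 1\<close> by (intro mult_strict_left_mono) auto
  ultimately show ?case using \<open>q^k * (q*q-q) > q^k*(q - 1)\<close> by (simp add: algebra_simps)
next
  case (Suc j)
  have D: "q^(k+Suc j+1) - q^(k+Suc j) = q*(q^(k+j+1) - q^(k+j))" by (simp add: algebra_simps)
  have D2: "q^(k+j+1) - q^(k+j) = q^(k+j)*(q-1)" by (simp add: algebra_simps)
  have pos: "q^(k+j)*(q-1) \<ge> 0" using q by simp
  have "q^(k+Suc j) - real (Suc j) * (q^(k+Suc j+1) - q^(k+Suc j))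
     = q*q^(k+j) - (real j + 1) * q * (q^(k+j)*(q-1))" using D D2 by simp
  also have "\<dots> \<le> q^(k+j) - real j * (q^(k+j)*(q-1))"
  proof -
    have Q: "q^(k+j) > 0" using q by simp
    have "q*q^(k+j) - q * (q^(k+j)*(q-1)) = (q*q^(k+j))*(2-q)" by (simp add: algebra_simps)
    also have "\<dots> \<le> 0" using q Q by (intro mult_nonneg_nonpos) auto
    finally have "q*q^(k+j) - q * (q^(k+j)*(q-1)) \<le> q^(k+j)" using Q by linarith
    moreover have "real j * (q^(k+j)*(q-1)) \<le> real j * q * (q^(k+j)*(q-1))"
    proof -
      have "real j * (q^(k+j)*(q-1)) = 1 * (real j * (q^(k+j)*(q-1)))" by simp
      also have "\<dots> \<le> q * (real j * (q^(k+j)*(q-1)))" using q pos by (intro mult_right_mono) auto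
      finally show ?thesis by (simp add: mult.assoc mult.left_commute)
    qed
    ultimately show ?thesis by (simp add: algebra_simps)
  qed
  finally show ?case using Suc D2 by simp
qed

lemma pow_chord:
  fixes q :: real assumes q: "q \<ge> 2"
  shows "q^k \<ge> q^m + (real k - real m) * (q^(m+1) - q^m)"
    and "k \<noteq> m \<Longrightarrow> k \<noteq> m+1 \<Longrightarrow> q^k > q^m + (real k - real m) * (q^(m+1) - q^m)"
proof -
  have A: "q^k \<ge> q^m + (real k - real m) * (q^(m+1) - q^m) \<and>
     (k \<noteq> m \<longrightarrow> k \<noteq> m+1 \<longrightarrow> q^k > q^m + (real k - real m) * (q^(m+1) - q^m))"
  proof (cases "k \<ge> m")
    case True
    then obtain j where k: "k = m + j" using le_Suc_ex by blast
    show ?thesis using pow_up[OF q, of m j] k by auto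
  next
    case False
    then obtain j where k: "m = k + j" "j \<ge> 1" by (metis le_Suc_ex less_one linorder_not_le nat_le_linear not_less_iff_gr_or_eq add_0_right)
    have "q^k > q^m - real j * (q^(m+1) - q^m)" using pow_down[OF q k(2), of k] k by simp
    moreover have "q^m + (real k - real m) * (q^(m+1) - q^m) = q^m - real j * (q^(m+1) - q^m)" using k by simp
    ultimately show ?thesis by linarith
  qed
  thus "q^k \<ge> q^m + (real k - real m) * (q^(m+1) - q^m)"
    and "k \<noteq> m \<Longrightarrow> k \<noteq> m+1 \<Longrightarrow> q^k > q^m + (real k - real m) * (q^(m+1) - q^m)" by auto
qed



lemma exp_strict: fixes x :: real assumes "x \<noteq> 0" shows "1 + x < exp x"
proof (cases "1 + x/2 \<ge> 0")
  case True
  have "exp x = exp (x/2) * exp (x/2)" by (simp flip: exp_add)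
  moreover have "exp (x/2) \<ge> 1 + x/2" by simp
  ultimately have "exp x \<ge> (1 + x/2) * (1 + x/2)" using True by (metis mult_mono' )
  moreover have "(1 + x/2) * (1 + x/2) = 1 + x + x*x/4" by (simp add: algebra_simps)
  moreover have "x*x > 0" using assms by (auto simp: zero_less_mult_iff linorder_neq_iff)
  ultimately show ?thesis by linarith
next
  case False
  then have "1 + x < 0" by simp
  then show ?thesis using exp_gt_zero[of x] by linarith
qed

lemma fact_char:
  fixes p e :: nat assumes p: "prime p"
  shows "(x::real^'n) \<in> vec_factorisations (p^e) \<longleftrightarrow> (\<exists>a::nat^'n. (\<Sum>i\<in>UNIV. a$i) = e \<and> x = (\<chi> i. real p ^ (a$i)))"
proof
  assume "x \<in> vec_factorisations (p^e)"
  then obtain v :: "nat^'n" where v: "(\<Prod>i\<in>UNIV. v$i) = p^e" "x = (\<chi> i. real (v$i))"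
    unfolding vec_factorisations_def by blast
  have "\<forall>i. \<exists>k. v$i = p^k"
  proof
    fix i
    have "v$i dvd p^e" using v(1) by (metis dvd_prodI finite UNIV_I)
    thus "\<exists>k. v$i = p^k" using divides_primepow_nat[OF p] by blast
  qed
  then obtain g where g: "\<And>i. v$i = p^(g i)" by metis
  define a where "a = (\<chi> i. g i)"
  have "p^(\<Sum>i\<in>UNIV. a$i) = p^e" using v(1) g by (simp add: a_def power_sum)
  hence "(\<Sum>i\<in>UNIV. a$i) = e" using p prime_gt_1_nat power_inject_exp by blast
  moreover have "x = (\<chi> i. real p ^ (a$i))" using v(2) g by (simp add: a_def)
  ultimately show "\<exists>a::nat^'n. (\<Sum>i\<in>UNIV. a$i) = e \<and> x = (\<chi> i. real p ^ (a$i))" by blast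
next
  assume "\<exists>a::nat^'n. (\<Sum>i\<in>UNIV. a$i) = e \<and> x = (\<chi> i. real p ^ (a$i))"
  then obtain a :: "nat^'n" where a: "(\<Sum>i\<in>UNIV. a$i) = e" "x = (\<chi> i. real p ^ (a$i))" by blast
  define v where "v = (\<chi> i. p ^ (a$i))"
  have "(\<Prod>i\<in>UNIV. v$i) = p^e" using a(1) by (simp add: v_def flip: power_sum)
  moreover have "x = (\<chi> i. real (v$i))" using a(2) by (simp add: v_def)
  ultimately show "x \<in> vec_factorisations (p^e)" unfolding vec_factorisations_def by blast
qed

lemma fact_finite:
  fixes p e :: nat assumes p: "prime p"
  shows "finite (vec_factorisations (p^e) :: (real^'n) set)"
proof -
  have "vec_factorisations (p^e) \<subseteq> (\<lambda>f. (\<chi> i. real p ^ (f i)) :: real^'n) ` (PiE UNIV (\<lambda>_. {..e}))"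
  proof
    fix x :: "real^'n" assume "x \<in> vec_factorisations (p^e)"
    then obtain a :: "nat^'n" where a: "(\<Sum>i\<in>UNIV. a$i) = e" "x = (\<chi> i. real p ^ (a$i))"
      using fact_char[OF p] by blast
    have "\<And>i. a$i \<le> e" using a(1) by (metis member_le_sum finite UNIV_I zero_le)
    hence "(\<lambda>i. a$i) \<in> PiE UNIV (\<lambda>_. {..e})" by (simp add: PiE_UNIV_domain)
    thus "x \<in> (\<lambda>f. (\<chi> i. real p ^ (f i)) :: real^'n) ` (PiE UNIV (\<lambda>_. {..e}))" using a(2) by blast
  qed
  moreover have "finite (PiE (UNIV::'n set) (\<lambda>_. {..e}))" by (intro finite_PiE) auto
  ultimately show ?thesis by (meson finite_imageI finite_subset)
qed

lemma hull_face:
  fixes G :: "'a::euclidean_space set"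
  assumes fin: "finite G" and ge: "\<forall>g\<in>G. a \<bullet> g \<ge> b"
  shows "\<forall>x\<in>convex hull G. a \<bullet> x \<ge> b"
    and "convex hull G \<inter> {x. a \<bullet> x = b} = convex hull {g\<in>G. a \<bullet> g = b}"
    and "convex hull {g\<in>G. a \<bullet> g = b} face_of convex hull G"
proof -
  have sub: "convex hull G \<subseteq> {x. a \<bullet> x \<ge> b}"
    using ge by (intro hull_minimal) (auto simp: convex_halfspace_ge)
  thus A: "\<forall>x\<in>convex hull G. a \<bullet> x \<ge> b" by blast
  have F: "convex hull G \<inter> {x. a \<bullet> x = b} face_of convex hull G"
    using A by (intro face_of_Int_supporting_hyperplane_ge) auto
  obtain S' where S': "S' \<subseteq> G" "convex hull G \<inter> {x. a \<bullet> x = b} = convex hull S'"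
    using face_of_convex_hull_subset[OF finite_imp_compact[OF fin] F] by blast
  have "S' \<subseteq> {g\<in>G. a \<bullet> g = b}" using S' hull_subset[of S' convex] by blast
  hence 1: "convex hull G \<inter> {x. a \<bullet> x = b} \<subseteq> convex hull {g\<in>G. a \<bullet> g = b}"
    using S'(2) hull_mono by metis
  have "convex hull {g\<in>G. a \<bullet> g = b} \<subseteq> {x. a \<bullet> x = b}"
    by (intro hull_minimal) (auto simp: convex_hyperplane)
  moreover have "convex hull {g\<in>G. a \<bullet> g = b} \<subseteq> convex hull G" by (intro hull_mono) auto
  ultimately show E: "convex hull G \<inter> {x. a \<bullet> x = b} = convex hull {g\<in>G. a \<bullet> g = b}" using 1 by blast
  show "convex hull {g\<in>G. a \<bullet> g = b} face_of convex hull G" using F E by simp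
qed



lemma ratio_exp: fixes q :: real assumes "q > 0"
  shows "q^a / q^b = exp ((real a - real b) * ln q)"
proof -
  have "q^a = exp (real a * ln q)" "q^b = exp (real b * ln q)"
    using assms by (simp_all add: exp_of_nat_mult)
  thus ?thesis by (simp add: exp_diff left_diff_distrib)
qed

lemma fact_extreme:
  fixes p e :: nat assumes p: "prime p" and g: "(g::real^'n) \<in> vec_factorisations (p^e)"
  shows "g extreme_point_of convex hull (vec_factorisations (p^e))"
proof -
  define G where "G = (vec_factorisations (p^e) :: (real^'n) set)"
  define q where "q = real p"
  have q2: "q \<ge> 2" using p prime_ge_2_nat q_def by auto
  have lq: "ln q > 0" using q2 by simp
  obtain a0 :: "nat^'n" where a0: "(\<Sum>i\<in>UNIV. a0$i) = e" "g = (\<chi> i. q ^ (a0$i))"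
    using fact_char[OF p] g q_def by blast
  define h :: "real^'n" where "h = (\<chi> i. 1 / q^(a0$i))"
  have key: "h \<bullet> y \<ge> real CARD('n) \<and> (h \<bullet> y = real CARD('n) \<longrightarrow> y = g)" if y: "y \<in> G" for y
  proof -
    obtain a :: "nat^'n" where a: "(\<Sum>i\<in>UNIV. a$i) = e" "y = (\<chi> i. q ^ (a$i))"
      using fact_char[OF p] y q_def G_def by blast
    have hy: "h \<bullet> y = (\<Sum>i\<in>UNIV. exp ((real (a$i) - real (a0$i)) * ln q))"
      unfolding inner_vec_def h_def a(2) using q2
      by (intro sum.cong refl) (simp add: ratio_exp[symmetric] divide_inverse)
    have le: "\<And>i. 1 + (real (a$i) - real (a0$i)) * ln q \<le> exp ((real (a$i) - real (a0$i)) * ln q)" by simp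
    have s: "(\<Sum>i\<in>UNIV. 1 + (real (a$i) - real (a0$i)) * ln q) = real CARD('n)"
    proof -
      have "(\<Sum>i\<in>UNIV. real (a$i)) = real e" using a(1) by (simp flip: of_nat_sum)
      moreover have "(\<Sum>i\<in>UNIV. real (a0$i)) = real e" using a0(1) by (simp flip: of_nat_sum)
      ultimately show ?thesis by (simp add: sum.distrib sum_subtractf flip: sum_distrib_right)
    qed
    have "h \<bullet> y \<ge> real CARD('n)" using hy s le sum_mono[of UNIV "\<lambda>i. 1 + (real (a$i) - real (a0$i)) * ln q"] by (metis (no_types, lifting))
    moreover have "y = g" if eq: "h \<bullet> y = real CARD('n)"
    proof (rule ccontr)
      assume "y \<noteq> g"
      then have "a \<noteq> a0" using a a0 by auto
      then obtain j where j: "a$j \<noteq> a0$j" by (metis vec_eq_iff)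
      have "(real (a$j) - real (a0$j)) * ln q \<noteq> 0" using j lq by simp
      hence "1 + (real (a$j) - real (a0$j)) * ln q < exp ((real (a$j) - real (a0$j)) * ln q)"
        by (rule exp_strict)
      hence "(\<Sum>i\<in>UNIV. 1 + (real (a$i) - real (a0$i)) * ln q) < (\<Sum>i\<in>UNIV. exp ((real (a$i) - real (a0$i)) * ln q))"
        using le by (intro sum_strict_mono_ex1) auto
      thus False using eq hy s by simp
    qed
    ultimately show ?thesis by blast
  qed
  have gG: "g \<in> G" using g G_def by simp
  have fin: "finite G" using fact_finite[OF p] G_def by simp
  have "{y\<in>G. h \<bullet> y = real CARD('n)} = {g}"
  proof -
    have "h \<bullet> g = real CARD('n)" unfolding inner_vec_def h_def a0(2) using q2 by simp
    hence "g \<in> {y\<in>G. h \<bullet> y = real CARD('n)}" using gG by simp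
    moreover have "\<And>y. y \<in> {y\<in>G. h \<bullet> y = real CARD('n)} \<Longrightarrow> y = g" using key by blast
    ultimately show ?thesis by blast
  qed
  then have "{g} face_of convex hull G"
    using hull_face(3)[OF fin, where a=h and b="real CARD('n)"] key by (simp add: convex_hull_singleton)
  thus ?thesis using face_of_singleton G_def by blast
qed



lemma sum_ind: "(\<Sum>k\<in>(UNIV::'n::finite set). (if k \<in> A then 1 else 0 :: real)) = real (card A)"
  by (simp add: sum.If_cases)

lemma hyp_aff_dim:
  fixes lam :: nat
  assumes l1: "1 \<le> lam" and l2: "lam \<le> CARD('n) - 1"
  shows "aff_dim {x::real^'n. (\<forall>i. x$i \<in> {0,1}) \<and> (\<Sum>i\<in>UNIV. x$i) = real lam} = int CARD('n) - 1"
proof -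
  define V where "V = {x::real^'n. (\<forall>i. x$i \<in> {0,1}) \<and> (\<Sum>i\<in>UNIV. x$i) = real lam}"
  define one :: "real^'n" where "one = (\<chi> i. 1)"
  define H where "H = {x::real^'n. one \<bullet> x = real lam}"
  have oneH: "one \<bullet> x = (\<Sum>i\<in>UNIV. x$i)" for x by (simp add: one_def inner_vec_def)
  have one0: "one \<noteq> 0" by (simp add: one_def vec_eq_iff)
  have VH: "V \<subseteq> H" by (auto simp: V_def H_def oneH)
  have dimH: "aff_dim H = int CARD('n) - 1" using one0 by (simp add: H_def)
  have ex: "\<exists>x\<in>V. x$i = 1 \<and> x$j = 0 \<and> (\<chi> k. if k = i then 0 else if k = j then 1 else x$k) \<in> V"
    if ij: "i \<noteq> j" for i j :: 'n
  proof -
    have "card (UNIV - {i,j}) = CARD('n) - 2" using ij by (simp add: card_Diff_subset)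
    hence "lam - 1 \<le> card (UNIV - {i,j})" using l1 l2 by linarith
    then obtain T where T: "T \<subseteq> UNIV - {i,j}" "card T = lam - 1"
      by (meson obtain_subset_with_card_n)
    have fT: "finite T" by simp
    define x :: "real^'n" where "x = (\<chi> k. if k \<in> insert i T then 1 else 0)"
    have "i \<notin> T" "j \<notin> T" using T by auto
    hence ci: "card (insert i T) = lam" and cj: "card (insert j T) = lam" using T l1 fT by (simp_all add: card_insert_if)
    have "x \<in> V" unfolding V_def x_def using ci sum_ind[of "insert i T"] by simp
    moreover have "(\<chi> k. if k = i then 0 else if k = j then 1 else x$k) = (\<chi> k. if k \<in> insert j T then 1 else 0)"
      using T ij by (auto simp: x_def vec_eq_iff)
    moreover have "(\<chi> k. if k \<in> insert j T then 1 else 0) \<in> V" unfolding V_def using cj sum_ind[of "insert j T"] by simp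
    moreover have "x$i = 1" "x$j = 0" using T ij by (auto simp: x_def)
    ultimately show ?thesis by metis
  qed
  obtain i0 j0 :: 'n where "i0 \<noteq> j0"
  proof -
    have "CARD('n) \<ge> 2" using l1 l2 by linarith
    then have "\<not> CARD('n) \<le> Suc 0" by linarith
    then show ?thesis using that by (metis card_le_Suc0_iff_eq finite)
  qed
  then obtain v0 where v0: "v0 \<in> V" using ex by blast
  define D where "D = span ((\<lambda>x. -v0 + x) ` (V - {v0}))"
  have aff: "affine hull V = (\<lambda>x. v0 + x) ` D" unfolding D_def by (rule affine_hull_span2[OF v0])
  have inD: "-v0 + x \<in> D" if "x \<in> V" for x
  proof (cases "x = v0")
    case True then show ?thesis by (simp add: D_def span_zero)
  next
    case False then show ?thesis using that by (auto simp: D_def intro: span_base)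
  qed
  have diffD: "x - y \<in> D" if "x \<in> V" "y \<in> V" for x y
  proof -
    have "x - y = (-v0 + x) - (-v0 + y)" by simp
    thus ?thesis using inD[OF that(1)] inD[OF that(2)] by (metis D_def span_diff)
  qed
  have axD: "axis i 1 - axis j 1 \<in> D" for i j :: 'n
  proof (cases "i = j")
    case True then show ?thesis by (simp add: D_def span_zero)
  next
    case False
    then obtain x where x: "x \<in> V" "x$i = 1" "x$j = 0" "(\<chi> k. if k = i then 0 else if k = j then 1 else x$k) \<in> V"
      using ex by blast
    have "x - (\<chi> k. if k = i then 0 else if k = j then 1 else x$k) = axis i 1 - axis j 1"
      using x(2,3) False by (auto simp: vec_eq_iff axis_def)
    thus ?thesis using diffD[OF x(1) x(4)] by simp
  qed
  have HV: "H \<subseteq> affine hull V"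
  proof
    fix z assume z: "z \<in> H"
    define w where "w = z - v0"
    have sw: "(\<Sum>i\<in>UNIV. w$i) = 0"
      using z VH v0 by (auto simp: w_def H_def oneH sum_subtractf)
    have "w = (\<Sum>i\<in>UNIV. w$i *\<^sub>R (axis i 1 - axis j0 1))"
    proof -
      have "(\<Sum>i\<in>UNIV. w$i *\<^sub>R (axis i 1 - axis j0 1))$k = w$k - (if k = j0 then (\<Sum>i\<in>UNIV. w$i) else 0)" for k
      proof -
        have "(\<Sum>i\<in>UNIV. w$i *\<^sub>R (axis i 1 - axis j0 1))$k = (\<Sum>i\<in>UNIV. w$i * ((if k = i then 1 else 0) - (if k = j0 then 1 else 0)))"
          by (simp add: sum_component axis_def)
        also have "\<dots> = (\<Sum>i\<in>UNIV. w$i * (if k = i then 1 else 0)) - (\<Sum>i\<in>UNIV. w$i * (if k = j0 then 1 else 0))"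
          by (simp only: right_diff_distrib sum_subtractf)
        also have "(\<Sum>i\<in>UNIV. w$i * (if k = i then 1 else 0)) = w$k"
          by (simp add: mult.commute[of _ "if _ then _ else _"] if_distrib cong: if_cong)
        also have "(\<Sum>i\<in>UNIV. w$i * (if k = j0 then 1 else 0)) = (\<Sum>i\<in>UNIV. w$i) * (if k = j0 then 1 else 0)"
          by (simp add: sum_distrib_right)
        finally show ?thesis by simp
      qed
      thus ?thesis using sw by (simp add: vec_eq_iff)
    qed
    moreover have "(\<Sum>i\<in>UNIV. w$i *\<^sub>R (axis i 1 - axis j0 1)) \<in> D"
      unfolding D_def by (intro span_sum span_mul) (use axD D_def in auto)
    ultimately have "w \<in> D" by simp
    thus "z \<in> affine hull V" unfolding aff using w_def by (metis add.commute diff_add_cancel image_eqI)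
  qed
  have "aff_dim H \<le> aff_dim V"
    using aff_dim_subset[OF HV] by simp
  moreover have "aff_dim V \<le> aff_dim H" using aff_dim_subset[OF VH] .
  ultimately show ?thesis using dimH V_def by simp
qed



lemma sum_bound:
  fixes q :: real and k :: "'n::finite \<Rightarrow> nat"
  assumes q: "q \<ge> 2" and sk: "(\<Sum>i\<in>UNIV. k i) = m * CARD('n) + lam" and l: "lam \<le> CARD('n)"
  shows "(\<Sum>i\<in>UNIV. q^(k i)) \<ge> real lam * q^(m+1) + real (CARD('n) - lam) * q^m"
    and "(\<exists>i. k i \<noteq> m \<and> k i \<noteq> m+1) \<Longrightarrow> (\<Sum>i\<in>UNIV. q^(k i)) > real lam * q^(m+1) + real (CARD('n) - lam) * q^m"
    and "(\<forall>i. k i = m \<or> k i = m+1) \<Longrightarrow> (\<Sum>i\<in>UNIV. q^(k i)) = real lam * q^(m+1) + real (CARD('n) - lam) * q^m"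
proof -
  define D where "D = q^(m+1) - q^m"
  define h where "h = (\<lambda>i. q^m + (real (k i) - real m) * D)"
  have hs: "(\<Sum>i\<in>UNIV. h i) = real lam * q^(m+1) + real (CARD('n) - lam) * q^m"
  proof -
    have "(\<Sum>i\<in>UNIV. real (k i)) = real m * real CARD('n) + real lam" using sk by (simp flip: of_nat_sum)
    hence s2: "(\<Sum>i\<in>UNIV. real (k i) - real m) = real lam" by (simp add: sum_subtractf)
    have "(\<Sum>i\<in>UNIV. h i) = real CARD('n) * q^m + (\<Sum>i\<in>UNIV. real (k i) - real m) * D"
      by (simp add: h_def sum.distrib sum_distrib_right)
    hence "(\<Sum>i\<in>UNIV. h i) = real CARD('n) * q^m + real lam * D" using s2 by simp
    also have "\<dots> = real lam * q^(m+1) + real (CARD('n) - lam) * q^m" using l by (simp add: D_def of_nat_diff algebra_simps)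
    finally show ?thesis .
  qed
  have le: "\<And>i. h i \<le> q^(k i)" unfolding h_def D_def using pow_chord(1)[OF q] by blast
  show "(\<Sum>i\<in>UNIV. q^(k i)) \<ge> real lam * q^(m+1) + real (CARD('n) - lam) * q^m"
    using sum_mono[of UNIV h "\<lambda>i. q^(k i)"] le hs by simp
  show "(\<exists>i. k i \<noteq> m \<and> k i \<noteq> m+1) \<Longrightarrow> (\<Sum>i\<in>UNIV. q^(k i)) > real lam * q^(m+1) + real (CARD('n) - lam) * q^m"
  proof -
    assume "\<exists>i. k i \<noteq> m \<and> k i \<noteq> m+1"
    then obtain j where "k j \<noteq> m" "k j \<noteq> m+1" by blast
    hence "h j < q^(k j)" unfolding h_def D_def using pow_chord(2)[OF q] by blast
    hence "(\<Sum>i\<in>UNIV. h i) < (\<Sum>i\<in>UNIV. q^(k i))" using le by (intro sum_strict_mono_ex1) auto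
    thus ?thesis using hs by simp
  qed
  show "(\<forall>i. k i = m \<or> k i = m+1) \<Longrightarrow> (\<Sum>i\<in>UNIV. q^(k i)) = real lam * q^(m+1) + real (CARD('n) - lam) * q^m"
  proof -
    assume a: "\<forall>i. k i = m \<or> k i = m+1"
    have "h i = q^(k i)" for i
    proof (cases "k i = m")
      case True then show ?thesis by (simp add: h_def)
    next
      case False then have "k i = m+1" using a by blast
      then show ?thesis by (simp add: h_def D_def)
    qed
    hence "(\<Sum>i\<in>UNIV. h i) = (\<Sum>i\<in>UNIV. q^(k i))" by simp
    thus ?thesis using hs by simp
  qed
qed



theorem corollary3p4:
  fixes p e lam :: nat and \<alpha> :: "nat^'n"
  assumes "prime p" and "e \<ge> 2" and "CARD('n) \<ge> 2"
    and "1 \<le> lam" and "lam \<le> min e (CARD('n) - 1)"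
    and "\<alpha> \<in> R_set lam e"
  shows "(\<forall>x \<in> factorisation_polytope (p ^ e).
            (\<Sum>i\<in>UNIV. real p ^ (\<alpha>$i) * x$i)
              \<ge> real lam * real p powi (mu_of lam e \<alpha> + 1)
                + real (CARD('n) - lam) * real p powi (mu_of lam e \<alpha>))
      \<and> (\<forall>x \<in> S_alpha p lam e \<alpha>.
            (\<Sum>i\<in>UNIV. real p ^ (\<alpha>$i) * x$i)
              = real lam * real p powi (mu_of lam e \<alpha> + 1)
                + real (CARD('n) - lam) * real p powi (mu_of lam e \<alpha>))
      \<and> (\<forall>x \<in> S_alpha p lam e \<alpha>. x extreme_point_of factorisation_polytope (p ^ e))
      \<and> (convex hull (S_alpha p lam e \<alpha>)) facet_of factorisation_polytope (p ^ e)
      \<and> affinely_equivalent (hypersimplex lam) (convex hull (S_alpha p lam e \<alpha>))"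
proof -
  note p = assms(1)
  define d where "d = CARD('n)"
  define q where "q = real p"
  have q2: "q \<ge> 2" using p prime_ge_2_nat q_def by auto
  have ld: "lam < d" "lam \<le> d" "lam \<le> d - 1" "lam \<le> e" using assms(3,5) d_def by auto
  have d2: "d \<ge> 2" using assms(3) d_def by simp
  define s where "s = (\<Sum>i\<in>UNIV. \<alpha>$i)"
  have R: "Max (range (\<lambda>i. \<alpha>$i)) * d < e + s" "[e + s = lam] (mod d)"
    using assms(6) by (auto simp: R_set_def d_def s_def)
  define m where "m = (e + s) div d"
  have esm: "e + s = m * d + lam"
  proof -
    have "(e + s) mod d = lam" using R(2) ld by (simp add: cong_def)
    thus ?thesis using div_mult_mod_eq[of "e+s" d] m_def by simp
  qed
  have mu: "mu_of lam e \<alpha> = int m"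
  proof -
    have "int e + (\<Sum>i\<in>UNIV. int (\<alpha>$i)) - int lam = int (m * d)"
      using esm by (simp add: s_def flip: of_nat_sum) (metis add_diff_cancel_right' of_nat_add of_nat_mult)
    thus ?thesis using d2 by (simp add: mu_of_def d_def flip: d_def)
  qed
  have ale: "\<alpha>$i \<le> m" for i
  proof -
    have "\<alpha>$i \<le> Max (range (\<lambda>i. \<alpha>$i))" by (intro Max_ge) auto
    hence "\<alpha>$i * d \<le> Max (range (\<lambda>i. \<alpha>$i)) * d" by simp
    hence "\<alpha>$i * d < m * d + d" using R(1) esm ld by linarith
    hence "\<alpha>$i * d < (m+1) * d" by simp
    thus ?thesis by (metis Suc_eq_plus1 less_Suc_eq_le mult_less_cancel2)
  qed
  define C where "C = real lam * q^(m+1) + real (d - lam) * q^m"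
  have Ceq: "real lam * real p powi (mu_of lam e \<alpha> + 1) + real (CARD('n) - lam) * real p powi (mu_of lam e \<alpha>) = C"
  proof -
    have "mu_of lam e \<alpha> + 1 = int (m+1)" using mu by simp
    thus ?thesis using mu by (simp only: power_int_of_nat C_def q_def d_def)
  qed
  define w :: "real^'n" where "w = (\<chi> i. q^(\<alpha>$i))"
  have fs: "(\<Sum>i\<in>UNIV. real p ^ (\<alpha>$i) * x$i) = w \<bullet> x" for x by (simp add: w_def inner_vec_def q_def)
  define G where "G = (vec_factorisations (p^e) :: (real^'n) set)"
  have finG: "finite G" using fact_finite[OF p] G_def by simp
  have Gc: "g \<in> G \<longleftrightarrow> (\<exists>a::nat^'n. (\<Sum>i\<in>UNIV. a$i) = e \<and> g = (\<chi> i. q ^ (a$i)))" for g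
    using fact_char[OF p] G_def q_def by simp
  have wG: "w \<bullet> (\<chi> i. q^(a$i)) = (\<Sum>i\<in>UNIV. q^(\<alpha>$i + a$i))" for a :: "nat^'n"
    by (simp add: w_def inner_vec_def power_add)
  have bnd: "(\<Sum>i\<in>UNIV. \<alpha>$i + a$i) = m * CARD('n) + lam" if "(\<Sum>i\<in>UNIV. a$i) = e" for a :: "nat^'n"
    using that esm by (simp add: sum.distrib s_def d_def)
  have Gge: "\<forall>g\<in>G. w \<bullet> g \<ge> C"
  proof
    fix g assume "g \<in> G"
    then obtain a :: "nat^'n" where a: "(\<Sum>i\<in>UNIV. a$i) = e" "g = (\<chi> i. q ^ (a$i))" using Gc by blast
    show "w \<bullet> g \<ge> C" using sum_bound(1)[OF q2 bnd[OF a(1)]] ld a(2) wG by (simp add: C_def d_def)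
  qed
  define E where "E = {\<epsilon>::nat^'n. (\<forall>i. \<epsilon>$i \<in> {0,1}) \<and> (\<Sum>i\<in>UNIV. \<epsilon>$i) = lam}"
  define ae where "ae \<epsilon> = (\<chi> i. (m - \<alpha>$i + \<epsilon>$i :: nat))" for \<epsilon> :: "nat^'n"
  define sv where "sv \<epsilon> = (\<chi> i. q^(ae \<epsilon> $ i))" for \<epsilon> :: "nat^'n"
  have Sdef: "S_alpha p lam e \<alpha> = sv ` E"
  proof -
    have "real p powi (mu_of lam e \<alpha> - int (\<alpha>$i) + int (\<epsilon>$i)) = q^(ae \<epsilon> $ i)" for \<epsilon> :: "nat^'n" and i
    proof -
      have "mu_of lam e \<alpha> - int (\<alpha>$i) + int (\<epsilon>$i) = int (m - \<alpha>$i + \<epsilon>$i)" using mu ale[of i] by simp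
      thus ?thesis unfolding ae_def q_def vec_lambda_beta by (simp only: power_int_of_nat)
    qed
    hence vv: "(\<chi> i. real p powi (mu_of lam e \<alpha> - int (\<alpha>$i) + int (\<epsilon>$i))) = sv \<epsilon>" for \<epsilon>
      unfolding sv_def by simp
    show ?thesis unfolding S_alpha_def E_def vv by blast
  qed
  have sumae: "(\<Sum>i\<in>UNIV. ae \<epsilon> $ i) + s = m * d + (\<Sum>i\<in>UNIV. \<epsilon>$i)" for \<epsilon>
  proof -
    have "(\<Sum>i\<in>UNIV. ae \<epsilon> $ i) + s = (\<Sum>i\<in>UNIV. ae \<epsilon> $ i + \<alpha>$i)" by (simp add: s_def sum.distrib)
    also have "\<dots> = (\<Sum>i\<in>UNIV. m + \<epsilon>$i)" 
    proof (intro sum.cong refl)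
      fix i show "ae \<epsilon> $ i + \<alpha>$i = m + \<epsilon>$i" using ale[of i] by (simp add: ae_def)
    qed
    also have "\<dots> = m * d + (\<Sum>i\<in>UNIV. \<epsilon>$i)" by (simp add: sum.distrib d_def)
    finally show ?thesis .
  qed
  have svG: "sv \<epsilon> \<in> G" if "\<epsilon> \<in> E" for \<epsilon>
  proof -
    have "(\<Sum>i\<in>UNIV. ae \<epsilon> $ i) = e" using sumae[of \<epsilon>] that esm by (simp add: E_def)
    thus ?thesis unfolding Gc sv_def by blast
  qed
  have svC: "w \<bullet> sv \<epsilon> = C" if "\<epsilon> \<in> E" for \<epsilon>
  proof -
    have "(\<Sum>i\<in>UNIV. ae \<epsilon> $ i) = e" using sumae[of \<epsilon>] that esm by (simp add: E_def)
    moreover have "\<forall>i. \<alpha>$i + ae \<epsilon> $ i = m \<or> \<alpha>$i + ae \<epsilon> $ i = m+1"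
    proof
      fix i
      have "\<alpha>$i + ae \<epsilon> $ i = m + \<epsilon>$i" using ale[of i] by (simp add: ae_def)
      moreover have "\<epsilon>$i \<in> {0,1}" using that by (simp add: E_def)
      ultimately show "\<alpha>$i + ae \<epsilon> $ i = m \<or> \<alpha>$i + ae \<epsilon> $ i = m+1" by auto
    qed
    ultimately show ?thesis using sum_bound(3)[OF q2 bnd] ld wG unfolding sv_def by (simp add: C_def d_def)
  qed
  have GS: "{g\<in>G. w \<bullet> g = C} = sv ` E"
  proof
    show "sv ` E \<subseteq> {g\<in>G. w \<bullet> g = C}" using svG svC by auto
    show "{g\<in>G. w \<bullet> g = C} \<subseteq> sv ` E"
    proof
      fix g assume "g \<in> {g\<in>G. w \<bullet> g = C}"
      then obtain a :: "nat^'n" where a: "(\<Sum>i\<in>UNIV. a$i) = e" "g = (\<chi> i. q ^ (a$i))" "w \<bullet> g = C"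
        using Gc by blast
      have bal: "\<forall>i. \<alpha>$i + a$i = m \<or> \<alpha>$i + a$i = m+1"
      proof (rule ccontr)
        assume "\<not> ?thesis"
        then have "w \<bullet> g > C" using sum_bound(2)[OF q2 bnd[OF a(1)]] ld a(2) wG by (simp add: C_def d_def)
        thus False using a(3) by simp
      qed
      define \<epsilon> where "\<epsilon> = (\<chi> i. (\<alpha>$i + a$i - m :: nat))"
      have aeq: "ae \<epsilon> $ i = a$i" for i using bal[rule_format, of i] ale[of i] by (auto simp: ae_def \<epsilon>_def)
      have e01: "\<forall>i. \<epsilon>$i \<in> {0,1}" using bal by (auto simp: \<epsilon>_def)
      have "m * d + (\<Sum>i\<in>UNIV. \<epsilon>$i) = m * d + lam" using sumae[of \<epsilon>] aeq a(1) esm by simp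
      hence "\<epsilon> \<in> E" using e01 by (simp add: E_def)
      moreover have "g = sv \<epsilon>" using a(2) aeq by (simp add: sv_def)
      ultimately show "g \<in> sv ` E" by blast
    qed
  qed
  have P: "factorisation_polytope (p^e) = convex hull G" by (simp add: factorisation_polytope_def G_def)
  have part1: "\<forall>x \<in> factorisation_polytope (p ^ e). w \<bullet> x \<ge> C"
    using hull_face(1)[OF finG Gge] P by simp
  have part2: "\<forall>x \<in> S_alpha p lam e \<alpha>. w \<bullet> x = C" using Sdef svC by auto
  have part3: "\<forall>x \<in> S_alpha p lam e \<alpha>. x extreme_point_of factorisation_polytope (p ^ e)"
  proof
    fix x assume "x \<in> S_alpha p lam e \<alpha>"
    then obtain \<epsilon> where "\<epsilon> \<in> E" "x = sv \<epsilon>" using Sdef by blast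
    then have "x \<in> vec_factorisations (p^e)" using svG G_def by simp
    thus "x extreme_point_of factorisation_polytope (p ^ e)"
      unfolding factorisation_polytope_def by (rule fact_extreme[OF p])
  qed
  define V where "V = {x::real^'n. (\<forall>i. x$i \<in> {0,1}) \<and> (\<Sum>i\<in>UNIV. x$i) = real lam}"
  define cf :: "real^'n" where "cf = (\<chi> i. q^(m - \<alpha>$i) * (q - 1))"
  define c0 :: "real^'n" where "c0 = (\<chi> i. q^(m - \<alpha>$i))"
  define L :: "real^'n \<Rightarrow> real^'n" where "L x = (\<chi> i. cf$i * x$i)" for x
  have cf0: "cf$i \<noteq> 0" for i using q2 by (simp add: cf_def)
  have linL: "linear L"
    by (intro linearI) (simp_all add: L_def vec_eq_iff algebra_simps)
  have injL: "inj L"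
  proof (rule injI)
    fix x y assume "L x = L y"
    hence "cf$i * x$i = cf$i * y$i" for i by (metis L_def vec_lambda_beta)
    thus "x = y" using cf0 by (simp add: vec_eq_iff)
  qed
  have surjL: "surj L"
  proof -
    have "L (\<chi> i. y$i / cf$i) = y" for y unfolding L_def vec_eq_iff using cf0 by simp
    thus ?thesis by (rule surjI)
  qed
  have Lsv: "L (\<chi> i. real (\<epsilon>$i)) + c0 = sv \<epsilon>" if "\<forall>i. \<epsilon>$i \<in> {0,1}" for \<epsilon>
  proof -
    have "cf$i * real (\<epsilon>$i) + c0$i = q^(ae \<epsilon> $ i)" for i
    proof (cases "\<epsilon>$i = 0")
      case True then show ?thesis by (simp add: cf_def c0_def ae_def)
    next
      case False then have "\<epsilon>$i = 1" using that[rule_format, of i] by simp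
      then show ?thesis by (simp add: cf_def c0_def ae_def algebra_simps)
    qed
    thus ?thesis by (simp add: vec_eq_iff L_def sv_def)
  qed
  have VE: "V = (\<lambda>\<epsilon>. \<chi> i. real (\<epsilon>$i)) ` E"
  proof
    show "(\<lambda>\<epsilon>. \<chi> i. real (\<epsilon>$i)) ` E \<subseteq> V"
    proof
      fix x assume "x \<in> (\<lambda>\<epsilon>. \<chi> i. real (\<epsilon>$i)) ` E"
      then obtain \<epsilon> where ep: "\<epsilon> \<in> E" "x = (\<chi> i. real (\<epsilon>$i))" by blast
      have "(\<Sum>i\<in>UNIV. x$i) = real (\<Sum>i\<in>UNIV. \<epsilon>$i)" using ep(2) by (simp add: of_nat_sum)
      also have "\<dots> = real lam" using ep(1) by (simp add: E_def)
      finally have "(\<Sum>i\<in>UNIV. x$i) = real lam" .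
      moreover have "\<forall>i. x$i \<in> {0,1}" using ep by (auto simp: E_def)
      ultimately show "x \<in> V" by (simp add: V_def)
    qed
    show "V \<subseteq> (\<lambda>\<epsilon>. \<chi> i. real (\<epsilon>$i)) ` E"
    proof
      fix v assume v: "v \<in> V"
      define \<epsilon> :: "nat^'n" where "\<epsilon> = (\<chi> i. if v$i = 1 then 1 else 0)"
      have ve: "v = (\<chi> i. real (\<epsilon>$i))" using v by (auto simp: V_def \<epsilon>_def vec_eq_iff)
      have "real (\<Sum>i\<in>UNIV. \<epsilon>$i) = real lam"
      proof -
        have "real (\<Sum>i\<in>UNIV. \<epsilon>$i) = (\<Sum>i\<in>UNIV. real (\<epsilon>$i))" by (simp only: of_nat_sum)
        also have "\<dots> = (\<Sum>i\<in>UNIV. v$i)" by (subst ve) simp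
        also have "\<dots> = real lam" using v by (simp add: V_def)
        finally show ?thesis .
      qed
      hence "(\<Sum>i\<in>UNIV. \<epsilon>$i) = lam" by (simp only: of_nat_eq_iff)
      moreover have "\<forall>i. \<epsilon>$i \<in> {0,1}" by (simp add: \<epsilon>_def)
      ultimately have "\<epsilon> \<in> E" by (simp add: E_def)
      thus "v \<in> (\<lambda>\<epsilon>. \<chi> i. real (\<epsilon>$i)) ` E" using ve by blast
    qed
  qed
  have imgV: "(\<lambda>x. c0 + x) ` (L ` V) = sv ` E"
  proof -
    have "(\<lambda>x. c0 + x) ` (L ` V) = (\<lambda>\<epsilon>. L (\<chi> i. real (\<epsilon>$i)) + c0) ` E"
      unfolding VE image_image by (simp add: add.commute)
    also have "\<dots> = sv ` E"
    proof (rule image_cong[OF refl])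
      fix \<epsilon> assume "\<epsilon> \<in> E"
      thus "L (\<chi> i. real (\<epsilon>$i)) + c0 = sv \<epsilon>" using Lsv by (simp add: E_def)
    qed
    finally show ?thesis .
  qed
  have hullimg: "(\<lambda>x. L x + c0) ` (convex hull V) = convex hull (sv ` E)"
  proof -
    have "(\<lambda>x. L x + c0) ` (convex hull V) = (\<lambda>x. c0 + x) ` (L ` (convex hull V))"
      by (simp add: image_image add.commute)
    also have "\<dots> = convex hull (sv ` E)"
      using convex_hull_linear_image[OF linL, of V] convex_hull_translation[of c0 "L ` V"] imgV by simp
    finally show ?thesis .
  qed
  have part5: "affinely_equivalent (hypersimplex lam) (convex hull (S_alpha p lam e \<alpha>))"
    unfolding affinely_equivalent_def hypersimplex_def Sdef
  proof (intro exI conjI)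
    show "linear L" by (rule linL)
    show "bij L" using injL surjL by (simp add: bij_def)
    show "(\<lambda>x. L x + c0) ` (convex hull {x. (\<forall>i. x $ i \<in> {0, 1}) \<and> (\<Sum>i\<in>UNIV. x $ i) = real lam}) = convex hull (sv ` E)"
      using hullimg unfolding V_def .
  qed
  have dimV: "aff_dim V = int d - 1" using hyp_aff_dim[OF assms(4)] ld V_def d_def by simp
  have dimS: "aff_dim (sv ` E) = int d - 1"
  proof -
    have "aff_dim (sv ` E) = aff_dim (L ` V)" using imgV[symmetric] aff_dim_translation_eq[of c0 "L ` V"] by simp
    also have "\<dots> = aff_dim V" using linL injL by simp
    finally show ?thesis using dimV by simp
  qed
  obtain i0 where i0: "\<alpha>$i0 = Max (range (\<lambda>i. \<alpha>$i))"
  proof -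
    have "Max (range (\<lambda>i. \<alpha>$i)) \<in> range (\<lambda>i. \<alpha>$i)" by (intro Max_in) auto
    thus ?thesis using that by (metis (no_types, lifting) imageE)
  qed
  define a0 :: "nat^'n" where "a0 = (\<chi> i. if i = i0 then e else 0)"
  have sa0: "(\<Sum>i\<in>UNIV. a0$i) = e" by (simp add: a0_def)
  define x0 where "x0 = (\<chi> i. q^(a0$i))"
  have x0G: "x0 \<in> G" using Gc sa0 x0_def by blast
  have x0C: "w \<bullet> x0 > C"
  proof -
    have "\<exists>i. \<alpha>$i + a0$i \<noteq> m \<and> \<alpha>$i + a0$i \<noteq> m+1"
    proof (cases "\<alpha>$i0 + e \<ge> m + 2")
      case True then show ?thesis by (intro exI[of _ i0]) (simp add: a0_def)
    next
      case False
      obtain j where j: "j \<noteq> i0"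
      proof -
        have "\<not> CARD('n) \<le> Suc 0" using d2 d_def by simp
        then show ?thesis using that by (metis card_le_Suc0_iff_eq finite)
      qed
      have "\<alpha>$j \<le> \<alpha>$i0" unfolding i0 by (intro Max_ge) auto
      hence "\<alpha>$j + a0$j < m" using False j assms(2) by (simp add: a0_def)
      then show ?thesis by (intro exI[of _ j]) simp
    qed
    thus ?thesis using sum_bound(2)[OF q2 bnd[OF sa0]] ld wG x0_def by (simp add: C_def d_def)
  qed
  have ahS: "affine hull (sv ` E) \<subseteq> {x. w \<bullet> x = C}"
  proof (rule hull_minimal)
    show "sv ` E \<subseteq> {x. w \<bullet> x = C}" using svC by blast
    show "affine {x. w \<bullet> x = C}" by (rule affine_hyperplane)
  qed
  have ps: "affine hull (sv ` E) \<subset> affine hull G"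
  proof -
    have "affine hull (sv ` E) \<subseteq> affine hull G" using svG by (intro hull_mono) auto
    moreover have "x0 \<in> affine hull G" by (rule hull_inc[OF x0G])
    moreover have "x0 \<notin> affine hull (sv ` E)"
    proof
      assume "x0 \<in> affine hull (sv ` E)"
      then have "w \<bullet> x0 = C" using ahS by blast
      thus False using x0C by simp
    qed
    ultimately show ?thesis by blast
  qed
  have dimG: "aff_dim G = int d"
  proof -
    have "aff_dim (sv ` E) < aff_dim G" by (rule aff_dim_psubset[OF ps])
    moreover have "aff_dim G \<le> int d" using aff_dim_le_DIM[of G] unfolding d_def by simp
    ultimately show ?thesis using dimS by linarith
  qed
  have Ene: "E \<noteq> {}"
  proof -
    obtain T :: "'n set" where T: "card T = lam" using ld d_def by (meson obtain_subset_with_card_n)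
    define \<epsilon> :: "nat^'n" where "\<epsilon> = (\<chi> i. if i \<in> T then 1 else 0)"
    have "(\<Sum>i\<in>UNIV. \<epsilon>$i) = lam" using T by (simp add: \<epsilon>_def sum.If_cases)
    hence "\<epsilon> \<in> E" by (simp add: E_def \<epsilon>_def)
    thus ?thesis by blast
  qed
  have part4: "(convex hull (S_alpha p lam e \<alpha>)) facet_of factorisation_polytope (p ^ e)"
  proof -
    have "convex hull (sv ` E) face_of convex hull G" using hull_face(3)[OF finG Gge] GS by simp
    moreover have "convex hull (sv ` E) \<noteq> {}" using Ene by simp
    moreover have "aff_dim (convex hull (sv ` E)) = aff_dim (convex hull G) - 1"
      using dimS dimG by (simp add: aff_dim_convex_hull)
    ultimately show ?thesis unfolding facet_of_def Sdef P by blast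
  qed
  show ?thesis using part1 part2 part3 part4 part5 unfolding fs Ceq by blast
qed

end
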